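(* Let $R$ be an amenable affine algebra over a field $K$ with no zero divisors. Then $R$ has Goldie dimension $1$, i.e. any two nonzero left ideals $I,J$ of $R$ satisfy $I\cap J\neq 0$.
   Context: An affine algebra is a finitely generated associative algebra over $K$, not necessarily unital. $R$ is amenable if there exist finite-dimensional $K$-subspaces $W_1\subseteq W_2\subseteq\cdots$ with $\bigcup_nW_n=R$ such that for every $r\in R$, $\lim_{n\to\infty}\dim_K(W_nr+W_n)/\dim_K(W_n)=1$. *)

theory Defs
  imports Complex_Main
begin

definition algebra_over :: "('k::field \<Rightarrow> 'r::ring \<Rightarrow> 'r) \<Rightarrow> bool" where
  "algebra_over scale \<longleftrightarrow> vector_space scale \<and>
     (\<forall>c x y. scale c (x * y) = scale c x * y) \<and>
     (\<forall>c x y. scale c (x * y) = x * scale c y)"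

inductive_set subalg_gen :: "('k::field \<Rightarrow> 'r::ring \<Rightarrow> 'r) \<Rightarrow> 'r set \<Rightarrow> 'r set"
  for scale :: "'k \<Rightarrow> 'r \<Rightarrow> 'r" and S :: "'r set" where
  gen: "x \<in> S \<Longrightarrow> x \<in> subalg_gen scale S"
| zero: "0 \<in> subalg_gen scale S"
| add: "x \<in> subalg_gen scale S \<Longrightarrow> y \<in> subalg_gen scale S \<Longrightarrow> x + y \<in> subalg_gen scale S"
| smult: "x \<in> subalg_gen scale S \<Longrightarrow> scale c x \<in> subalg_gen scale S"
| mult: "x \<in> subalg_gen scale S \<Longrightarrow> y \<in> subalg_gen scale S \<Longrightarrow> x * y \<in> subalg_gen scale S"

definition affine_algebra :: "('k::field \<Rightarrow> 'r::ring \<Rightarrow> 'r) \<Rightarrow> bool" where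
  "affine_algebra scale \<longleftrightarrow> algebra_over scale \<and>
     (\<exists>S. finite S \<and> subalg_gen scale S = UNIV)"

definition fin_dim_subspace :: "('k::field \<Rightarrow> 'r::ring \<Rightarrow> 'r) \<Rightarrow> 'r set \<Rightarrow> bool" where
  "fin_dim_subspace scale W \<longleftrightarrow> (\<exists>B. finite B \<and> W = module.span scale B)"

definition amenable :: "('k::field \<Rightarrow> 'r::ring \<Rightarrow> 'r) \<Rightarrow> bool" where
  "amenable scale \<longleftrightarrow> (\<exists>W :: nat \<Rightarrow> 'r set.
     (\<forall>n. fin_dim_subspace scale (W n)) \<and>
     (\<forall>n. W n \<subseteq> W (Suc n)) \<and>
     (\<Union>n. W n) = UNIV \<and>
     (\<forall>r. (\<lambda>n. real (vector_space.dim scale {w * r + w' | w w'. w \<in> W n \<and> w' \<in> W n})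
                 / real (vector_space.dim scale (W n))) \<longlonglongrightarrow> 1))"

definition left_ideal :: "('k::field \<Rightarrow> 'r::ring \<Rightarrow> 'r) \<Rightarrow> 'r set \<Rightarrow> bool" where
  "left_ideal scale I \<longleftrightarrow> module.subspace scale I \<and> (\<forall>r x. x \<in> I \<longrightarrow> r * x \<in> I)"

end

theory Submission
  imports Defs
begin

lemma rmult_hom:
  fixes scale :: "'k::field \<Rightarrow> 'r::ring \<Rightarrow> 'r"
  assumes "algebra_over scale"
  shows "module_hom scale scale (\<lambda>w. w * a)"
  using assms unfolding algebra_over_def module_hom_iff module_iff_vector_space
  by (simp add: distrib_right)

lemma key:
  fixes scale :: "'k::field \<Rightarrow> 'r::ring \<Rightarrow> 'r"
  assumes alg: "algebra_over scale"
    and nozd: "\<forall>a b :: 'r. a * b = 0 \<longrightarrow> a = 0 \<or> b = 0"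
    and I: "left_ideal scale I" and J: "left_ideal scale J" and IJ: "I \<inter> J = {0}"
    and a: "a \<in> I" "a \<noteq> 0" and b: "b \<in> J" "b \<noteq> 0"
    and W: "finite B" "W = module.span scale B"
  shows "3 * vector_space.dim scale W \<le>
     vector_space.dim scale {w * a + w' | w w'. w \<in> W \<and> w' \<in> W}
   + vector_space.dim scale {w * b + w' | w w'. w \<in> W \<and> w' \<in> W}"
proof -
  interpret vs: vector_space scale using alg unfolding algebra_over_def by blast
  interpret ha: module_hom scale scale "\<lambda>w. w * a" by (rule rmult_hom[OF alg])
  interpret hb: module_hom scale scale "\<lambda>w. w * b" by (rule rmult_hom[OF alg])
  have Is: "vs.subspace I" and Im: "\<And>r x. x \<in> I \<Longrightarrow> r * x \<in> I" using I unfolding left_ideal_def by auto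
  have Js: "vs.subspace J" and Jm: "\<And>r x. x \<in> J \<Longrightarrow> r * x \<in> J" using J unfolding left_ideal_def by auto
  obtain C where C: "C \<subseteq> W" "vs.independent C" "W \<subseteq> vs.span C" "card C = vs.dim W"
    by (rule vs.basis_exists)
  have finC: "finite C" using vs.independent_span_bound[OF W(1) C(2)] C(1) W(2) by auto
  have W0: "0 \<in> W" using W(2) vs.span_zero by simp
  have injA: "inj (\<lambda>w. w * a)"
    by (rule injI) (metis a(2) nozd left_diff_distrib eq_iff_diff_eq_0)
  have injB: "inj (\<lambda>w. w * b)"
    by (rule injI) (metis b(2) nozd left_diff_distrib eq_iff_diff_eq_0)
  define Ca where "Ca = (\<lambda>w. w * a) ` C"
  define Cb where "Cb = (\<lambda>w. w * b) ` C"
  have indCa: "vs.independent Ca" unfolding Ca_def by (rule ha.independent_inj_image[OF C(2) injA])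
  have indCb: "vs.independent Cb" unfolding Cb_def by (rule hb.independent_inj_image[OF C(2) injB])
  have cardCa: "card Ca = card C" unfolding Ca_def by (rule card_image[OF inj_on_subset[OF injA]]) simp
  have cardCb: "card Cb = card C" unfolding Cb_def by (rule card_image[OF inj_on_subset[OF injB]]) simp
  have CaI: "Ca \<subseteq> I" unfolding Ca_def using Im[OF a(1)] by auto
  have CbJ: "Cb \<subseteq> J" unfolding Cb_def using Jm[OF b(1)] by auto
  have spCaI: "vs.span Ca \<subseteq> I" by (rule vs.span_minimal[OF CaI Is])
  have spCbJ: "vs.span Cb \<subseteq> J" by (rule vs.span_minimal[OF CbJ Js])
  have C0: "0 \<notin> C" using C(2) vs.dependent_zero by blast
  have disj: "Ca \<inter> Cb = {}"
  proof (rule ccontr)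
    assume "Ca \<inter> Cb \<noteq> {}"
    then obtain x where x: "x \<in> Ca" "x \<in> Cb" by blast
    then have "x \<in> I \<inter> J" using CaI CbJ by blast
    then have "x = 0" using IJ by blast
    then show False using x(1) C0 a(2) nozd unfolding Ca_def by (metis imageE)
  qed
  have indS: "vs.independent (Ca \<union> Cb)"
  proof
    assume "vs.dependent (Ca \<union> Cb)"
    then obtain x where x: "x \<in> Ca \<union> Cb" "x \<in> vs.span (Ca \<union> Cb - {x})"
      unfolding vs.dependent_def by blast
    show False
    proof (cases "x \<in> Ca")
      case True
      then have "x \<notin> Cb" using disj by blast
      then have "Ca \<union> Cb - {x} = (Ca - {x}) \<union> Cb" by blast
      with x(2) have "x \<in> {y + z | y z. y \<in> vs.span (Ca - {x}) \<and> z \<in> vs.span Cb}"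
        using vs.span_Un[of "Ca - {x}" Cb] by simp
      then obtain y z where yz: "x = y + z" "y \<in> vs.span (Ca - {x})" "z \<in> vs.span Cb"
        by blast
      have "y \<in> I" using yz(2) spCaI vs.span_mono[of "Ca - {x}" Ca] by blast
      moreover have "x \<in> I" using True CaI by blast
      ultimately have "z \<in> I" using vs.subspace_diff[OF Is] yz(1)
        by (metis add_diff_cancel_left')
      moreover have "z \<in> J" using yz(3) spCbJ by blast
      ultimately have "z = 0" using IJ by blast
      then have "x \<in> vs.span (Ca - {x})" using yz by simp
      then show False using indCa True unfolding vs.dependent_def by blast
    next
      case False
      then have xb: "x \<in> Cb" using x(1) by blast
      then have "Ca \<union> Cb - {x} = Ca \<union> (Cb - {x})" using False by blast
      with x(2) have "x \<in> {y + z | y z. y \<in> vs.span Ca \<and> z \<in> vs.span (Cb - {x})}"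
        using vs.span_Un[of Ca "Cb - {x}"] by simp
      then obtain y z where yz: "x = y + z" "y \<in> vs.span Ca" "z \<in> vs.span (Cb - {x})"
        by blast
      have "z \<in> J" using yz(3) spCbJ vs.span_mono[of "Cb - {x}" Cb] by blast
      moreover have "x \<in> J" using xb CbJ by blast
      ultimately have "y \<in> J" using vs.subspace_diff[OF Js] yz(1)
        by (metis add_diff_cancel_right')
      moreover have "y \<in> I" using yz(2) spCaI by blast
      ultimately have "y = 0" using IJ by blast
      then have "x \<in> vs.span (Cb - {x})" using yz by simp
      then show False using indCb xb unfolding vs.dependent_def by blast
    qed
  qed
  define Aa where "Aa = {w * a + w' | w w'. w \<in> W \<and> w' \<in> W}"
  define Ab where "Ab = {w * b + w' | w w'. w \<in> W \<and> w' \<in> W}"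
  have CAa: "C \<subseteq> Aa" unfolding Aa_def using C(1) W0 by force
  have CAb: "C \<subseteq> Ab" unfolding Ab_def using C(1) W0 by force
  have CaAa: "Ca \<subseteq> Aa" unfolding Aa_def Ca_def using C(1) W0 by force
  have CbAb: "Cb \<subseteq> Ab" unfolding Ab_def Cb_def using C(1) W0 by force
  have Aasp: "Aa \<subseteq> vs.span (C \<union> Ca)"
  proof
    fix x assume "x \<in> Aa"
    then obtain w w' where ww: "x = w * a + w'" "w \<in> W" "w' \<in> W" unfolding Aa_def by blast
    have "w * a \<in> vs.span Ca" using ww(2) C(3) ha.span_image[of C] unfolding Ca_def by blast
    moreover have "w' \<in> vs.span C" using ww(3) C(3) by blast
    ultimately have "w' + w * a \<in> {x + y |x y. x \<in> vs.span C \<and> y \<in> vs.span Ca}" by blast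
    then show "x \<in> vs.span (C \<union> Ca)" unfolding vs.span_Un ww(1) by (simp add: add.commute)
  qed
  have Absp: "Ab \<subseteq> vs.span (C \<union> Cb)"
  proof
    fix x assume "x \<in> Ab"
    then obtain w w' where ww: "x = w * b + w'" "w \<in> W" "w' \<in> W" unfolding Ab_def by blast
    have "w * b \<in> vs.span Cb" using ww(2) C(3) hb.span_image[of C] unfolding Cb_def by blast
    moreover have "w' \<in> vs.span C" using ww(3) C(3) by blast
    ultimately have "w' + w * b \<in> {x + y |x y. x \<in> vs.span C \<and> y \<in> vs.span Cb}" by blast
    then show "x \<in> vs.span (C \<union> Cb)" unfolding vs.span_Un ww(1) by (simp add: add.commute)
  qed
  obtain Ba where Ba: "C \<subseteq> Ba" "Ba \<subseteq> Aa" "vs.independent Ba" "Aa \<subseteq> vs.span Ba"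
    using vs.maximal_independent_subset_extend[OF CAa C(2)] by blast
  obtain Bb where Bb: "C \<subseteq> Bb" "Bb \<subseteq> Ab" "vs.independent Bb" "Ab \<subseteq> vs.span Bb"
    using vs.maximal_independent_subset_extend[OF CAb C(2)] by blast
  have finBa: "finite Ba"
    using vs.independent_span_bound[OF _ Ba(3), of "C \<union> Ca"] Ba(2) Aasp finC unfolding Ca_def by auto
  have finBb: "finite Bb"
    using vs.independent_span_bound[OF _ Bb(3), of "C \<union> Cb"] Bb(2) Absp finC unfolding Cb_def by auto
  have dA: "card Ba = vs.dim Aa" by (rule vs.basis_card_eq_dim[OF Ba(2) Ba(4) Ba(3)])
  have dB: "card Bb = vs.dim Ab" by (rule vs.basis_card_eq_dim[OF Bb(2) Bb(4) Bb(3)])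
  have "Ca \<union> Cb \<subseteq> vs.span (Ba \<union> Bb)"
    using CaAa CbAb Ba(4) Bb(4) vs.span_mono[of Ba "Ba \<union> Bb"] vs.span_mono[of Bb "Ba \<union> Bb"] by blast
  then have "card (Ca \<union> Cb) \<le> card (Ba \<union> Bb)"
    using vs.independent_span_bound[OF _ indS] finBa finBb by blast
  moreover have "card (Ca \<union> Cb) = 2 * card C"
    using card_Un_disjoint[of Ca Cb] disj cardCa cardCb finC unfolding Ca_def Cb_def by auto
  moreover have "card (Ba \<union> Bb) + card (Ba \<inter> Bb) = card Ba + card Bb"
    using card_Un_Int[OF finBa finBb] by simp
  moreover have "card C \<le> card (Ba \<inter> Bb)"
    by (rule card_mono) (use finBa Ba(1) Bb(1) in auto)
  ultimately show ?thesis using dA dB C(4) unfolding Aa_def Ab_def by linarith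
qed


theorem proposition6:
  fixes scale :: "'k::field \<Rightarrow> 'r::ring \<Rightarrow> 'r"
  assumes "affine_algebra scale"
    and "amenable scale"
    and "\<forall>a b :: 'r. a * b = 0 \<longrightarrow> a = 0 \<or> b = 0"
    and "left_ideal scale I" and "I \<noteq> {0}"
    and "left_ideal scale J" and "J \<noteq> {0}"
  shows "I \<inter> J \<noteq> {0}"
proof (rule ccontr)
  assume "\<not> I \<inter> J \<noteq> {0}"
  then have IJ: "I \<inter> J = {0}" by simp
  have alg: "algebra_over scale" using assms(1) unfolding affine_algebra_def by blast
  interpret vs: vector_space scale using alg unfolding algebra_over_def by blast
  have "vs.subspace I" using assms(4) unfolding left_ideal_def by blast
  then have "0 \<in> I" by (rule vs.subspace_0)
  then obtain a where a: "a \<in> I" "a \<noteq> 0" using assms(5) by blast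
  have "vs.subspace J" using assms(6) unfolding left_ideal_def by blast
  then have "0 \<in> J" by (rule vs.subspace_0)
  then obtain b where b: "b \<in> J" "b \<noteq> 0" using assms(7) by blast
  obtain W :: "nat \<Rightarrow> 'r set" where
    Wfd: "\<And>n. fin_dim_subspace scale (W n)" and Wmono: "\<And>n. W n \<subseteq> W (Suc n)"
    and Wun: "(\<Union>n. W n) = UNIV"
    and lim: "\<And>r. (\<lambda>n. real (vs.dim {w * r + w' | w w'. w \<in> W n \<and> w' \<in> W n})
                 / real (vs.dim (W n))) \<longlonglongrightarrow> 1"
    using assms(2) unfolding amenable_def by blast
  let ?f = "\<lambda>r n. real (vs.dim {w * r + w' | w w'. w \<in> W n \<and> w' \<in> W n}) / real (vs.dim (W n))"
  have L: "(\<lambda>n. ?f a n + ?f b n) \<longlonglongrightarrow> 1 + 1" by (intro tendsto_add lim)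
  obtain N where N: "a \<in> W N" using Wun by blast
  have ev: "\<forall>n\<ge>N. 3 \<le> ?f a n + ?f b n"
  proof (intro allI impI)
    fix n assume "N \<le> n"
    then have "W N \<subseteq> W n" using lift_Suc_mono_le[of W, OF Wmono] by blast
    with N have an: "a \<in> W n" by blast
    obtain B where B: "finite B" "W n = vs.span B" using Wfd[of n] unfolding fin_dim_subspace_def by blast
    obtain C where C: "C \<subseteq> W n" "vs.independent C" "W n \<subseteq> vs.span C" "card C = vs.dim (W n)"
      by (rule vs.basis_exists)
    have finC: "finite C" using vs.independent_span_bound[OF B(1) C(2)] C(1) B(2) by auto
    have "vs.dim (W n) \<noteq> 0"
    proof
      assume "vs.dim (W n) = 0"
      then have "C = {}" using C(4) finC by simp
      then show False using an C(3) a(2) by auto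
    qed
    then have dpos: "real (vs.dim (W n)) > 0" by simp
    have K: "3 * vs.dim (W n) \<le> vs.dim {w * a + w' | w w'. w \<in> W n \<and> w' \<in> W n}
      + vs.dim {w * b + w' | w w'. w \<in> W n \<and> w' \<in> W n}"
      by (rule key[OF alg assms(3) assms(4) assms(6) IJ a b B])
    then have "3 * real (vs.dim (W n)) \<le> real (vs.dim {w * a + w' | w w'. w \<in> W n \<and> w' \<in> W n})
      + real (vs.dim {w * b + w' | w w'. w \<in> W n \<and> w' \<in> W n})" by linarith
    then show "3 \<le> ?f a n + ?f b n" using dpos by (simp add: field_simps add_divide_distrib[symmetric])
  qed
  have "3 \<le> (1::real) + 1" by (rule LIMSEQ_le_const[OF L]) (use ev in blast)
  then show False by simp
qed

end
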